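(* Let $(\{\mathcal M_{A_i}\}_{i=1}^m,\tau)$ be a mutually commuting von Neumann algebra (MCvNA) model of a network $\Xi(n,m)$ with maximal independence number $h_{\max}$, i.e. $\tau$ is a network state. Let $2\le h\le h_{\max}$, let $R=\{r_1,\dots,r_h\}\in\Gamma(n,m,h^{D_h})$, and for every $i\in\{1,\dots,m\}$ let $A_{i,0},A_{i,1}\in\mathcal M_{A_i}$ be observables. Then $$\mathcal S_\tau=|I_\tau|^{1/h}+|J_\tau|^{1/h}\le 2\sqrt2 .$$
   Context: A network $\Xi(n,m)$ consists of $m$ parties $\mathbf A_1,\dots,\mathbf A_m$ and $n$ sources, each source being distributed to some subset of the parties. A set of parties is called independent if no two of its members receive a common source. For an integer $h$, $\Gamma(n,m,h^{D_h})$ denotes the family (of cardinality $D_h$) of all index sets $\{r_1,\dots,r_h\}\subset\{1,\dots,m\}$ such that $\mathbf A_{r_1},\dots,\mathbf A_{r_h}$ are independent; $h_{\max}$ is the largest $h$ for which this family is nonempty, and one always takes $2\le h\le h_{\max}$. MCvNA model of the network: von Neumann algebras $\mathcal M_{A_1},\dots,\mathcal M_{A_m}\subset\mathcal B(H)$ on a common Hilbert space $H$ which mutually commute ($\mathcal M_{A_i}\subset\mathcal M_{A_j}'$ for $i\neq j$), together with a state $\tau$ (positive linear functional with $\tau(I)=1$) on $\mathcal M_{A_1A_2\cdots A_m}:=(\mathcal M_{A_1}\vee\cdots\vee\mathcal M_{A_m})''$, called a network state, such that for every $h$ with $2\le h\le h_{\max}$ and every $\{r_1,\dots,r_h\}\in\Gamma(n,m,h^{D_h})$,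 $$\tau(A_{r_1}A_{r_2}\cdots A_{r_h})=\tau(A_{r_1})\tau(A_{r_2})\cdots\tau(A_{r_h})\quad\text{for all }A_{r_k}\in\mathcal M_{A_{r_k}}.$$ Observables: for each party $i$, $A_{i,0},A_{i,1}$ are self-adjoint elements of $\mathcal M_{A_i}$ with $-I\le A_{i,x}\le I$ (two inputs $x\in\{0,1\}$, outputs $\pm1$). Bell-type quantities: for fixed $h$ and $R=\{r_1,\dots,r_h\}\in\Gamma(n,m,h^{D_h})$, writing $R^c=\{1,\dots,m\}\setminus R$, $$I_\tau=\tau\Big(\prod_{i\in R}(A_{i,0}+A_{i,1})\prod_{j\in R^c}A_{j,0}\Big),\qquad J_\tau=\tau\Big(\prod_{i\in R}(A_{i,0}-A_{i,1})\prod_{j\in R^c}A_{j,1}\Big),$$ and $\mathcal S_\tau=|I_\tau|^{1/h}+|J_\tau|^{1/h}$ (the order of factors is irrelevant since the algebras commute). *)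

theory Defs
  imports "HOL-Analysis.Analysis"
begin

class complex_vector = real_vector +
  fixes scaleC :: "complex \<Rightarrow> 'a \<Rightarrow> 'a" (infixr "*\<^sub>C" 75)
  assumes scaleC_add_right: "a *\<^sub>C (x + y) = a *\<^sub>C x + a *\<^sub>C y"
    and scaleC_add_left: "(a + b) *\<^sub>C x = a *\<^sub>C x + b *\<^sub>C x"
    and scaleC_scaleC: "a *\<^sub>C (b *\<^sub>C x) = (a * b) *\<^sub>C x"
    and scaleC_one: "1 *\<^sub>C x = x"
    and scaleR_scaleC: "scaleR r x = complex_of_real r *\<^sub>C x"

class complex_inner = complex_vector + real_normed_vector +
  fixes cinner :: "'a \<Rightarrow> 'a \<Rightarrow> complex"
  assumes cinner_conj: "cinner x y = cnj (cinner y x)"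
    and cinner_add_right: "cinner x (y + z) = cinner x y + cinner x z"
    and cinner_scaleC_right: "cinner x (a *\<^sub>C y) = a * cinner x y"
    and cinner_self_nonneg: "0 \<le> Re (cinner x x)"
    and cinner_self_eq_zero: "cinner x x = 0 \<longleftrightarrow> x = 0"
    and norm_eq_sqrt_cinner: "norm x = sqrt (Re (cinner x x))"

class chilbert_space = complex_inner + complete_space

text \<open>Consistency check: the complex numbers form a complex Hilbert space.\<close>
instantiation complex :: chilbert_space
begin
definition scaleC_complex :: "complex \<Rightarrow> complex \<Rightarrow> complex" where
  "scaleC_complex a x = a * x"
definition cinner_complex :: "complex \<Rightarrow> complex \<Rightarrow> complex" where
  "cinner_complex x y = cnj x * y"
instance
proof
  fix a b x y z :: complex and r :: real
  show "a *\<^sub>C (x + y) = a *\<^sub>C x + a *\<^sub>C y" by (simp add: scaleC_complex_def algebra_simps)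
  show "(a + b) *\<^sub>C x = a *\<^sub>C x + b *\<^sub>C x" by (simp add: scaleC_complex_def algebra_simps)
  show "a *\<^sub>C (b *\<^sub>C x) = (a * b) *\<^sub>C x" by (simp add: scaleC_complex_def algebra_simps)
  show "1 *\<^sub>C x = x" by (simp add: scaleC_complex_def)
  show "scaleR r x = complex_of_real r *\<^sub>C x" by (simp add: scaleC_complex_def scaleR_conv_of_real)
  show "cinner x y = cnj (cinner y x)" by (simp add: cinner_complex_def mult.commute)
  show "cinner x (y + z) = cinner x y + cinner x z" by (simp add: cinner_complex_def algebra_simps)
  show "cinner x (a *\<^sub>C y) = a * cinner x y" by (simp add: cinner_complex_def scaleC_complex_def algebra_simps)
  show "0 \<le> Re (cinner x x)" by (simp add: cinner_complex_def)
  show "cinner x x = 0 \<longleftrightarrow> x = 0" by (simp add: cinner_complex_def)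
  show "norm x = sqrt (Re (cinner x x))"
    by (simp add: cinner_complex_def cmod_def power2_eq_square)
qed
end

definition bounded_clinear_op :: "('h::complex_inner \<Rightarrow> 'h) \<Rightarrow> bool" where
  "bounded_clinear_op T \<longleftrightarrow>
     (\<forall>x y. T (x + y) = T x + T y) \<and> (\<forall>c x. T (c *\<^sub>C x) = c *\<^sub>C T x) \<and>
     (\<exists>K. \<forall>x. norm (T x) \<le> norm x * K)"

definition BH :: "('h::complex_inner \<Rightarrow> 'h) set" where
  "BH = {T. bounded_clinear_op T}"

definition adj :: "('h::complex_inner \<Rightarrow> 'h) \<Rightarrow> ('h \<Rightarrow> 'h)" where
  "adj T = (SOME S. \<forall>x y. cinner (S x) y = cinner x (T y))"

definition op_plus :: "('h::complex_inner \<Rightarrow> 'h) \<Rightarrow> ('h \<Rightarrow> 'h) \<Rightarrow> ('h \<Rightarrow> 'h)" where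
  "op_plus A B = (\<lambda>x. A x + B x)"

definition op_minus :: "('h::complex_inner \<Rightarrow> 'h) \<Rightarrow> ('h \<Rightarrow> 'h) \<Rightarrow> ('h \<Rightarrow> 'h)" where
  "op_minus A B = (\<lambda>x. A x - B x)"

definition op_scale :: "complex \<Rightarrow> ('h::complex_inner \<Rightarrow> 'h) \<Rightarrow> ('h \<Rightarrow> 'h)" where
  "op_scale c A = (\<lambda>x. c *\<^sub>C A x)"

definition pos_op :: "('h::complex_inner \<Rightarrow> 'h) \<Rightarrow> bool" where
  "pos_op P \<longleftrightarrow> (\<forall>x. Im (cinner x (P x)) = 0 \<and> 0 \<le> Re (cinner x (P x)))"

definition op_le :: "('h::complex_inner \<Rightarrow> 'h) \<Rightarrow> ('h \<Rightarrow> 'h) \<Rightarrow> bool" where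
  "op_le A B \<longleftrightarrow> pos_op (op_minus B A)"

definition commutant :: "('h::complex_inner \<Rightarrow> 'h) set \<Rightarrow> ('h \<Rightarrow> 'h) set" where
  "commutant S = {T \<in> BH. \<forall>A\<in>S. T \<circ> A = A \<circ> T}"

definition von_neumann_algebra :: "('h::complex_inner \<Rightarrow> 'h) set \<Rightarrow> bool" where
  "von_neumann_algebra M \<longleftrightarrow>
     M \<subseteq> BH \<and> (\<forall>A\<in>M. adj A \<in> M) \<and> commutant (commutant M) = M"

definition joint_vN :: "(nat \<Rightarrow> ('h::complex_inner \<Rightarrow> 'h) set) \<Rightarrow> nat \<Rightarrow> ('h \<Rightarrow> 'h) set" where
  "joint_vN M m = commutant (commutant (\<Union>i\<in>{1..m}. M i))"

definition is_state :: "('h::complex_inner \<Rightarrow> 'h) set \<Rightarrow> (('h \<Rightarrow> 'h) \<Rightarrow> complex) \<Rightarrow> bool" where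
  "is_state N tau \<longleftrightarrow>
     (\<forall>A\<in>N. \<forall>B\<in>N. tau (op_plus A B) = tau A + tau B) \<and>
     (\<forall>c. \<forall>A\<in>N. tau (op_scale c A) = c * tau A) \<and>
     (\<forall>P\<in>N. pos_op P \<longrightarrow> Im (tau P) = 0 \<and> 0 \<le> Re (tau P)) \<and>
     tau id = 1"

definition prod_ops :: "(nat \<Rightarrow> ('h \<Rightarrow> 'h)) \<Rightarrow> nat set \<Rightarrow> ('h \<Rightarrow> 'h)" where
  "prod_ops f S = foldr (\<lambda>i acc. f i \<circ> acc) (sorted_list_of_set S) id"

text \<open>Network Xi(n,m): sources 1..n, parties 1..m; src s is the set of parties receiving source s.\<close>
definition network :: "nat \<Rightarrow> nat \<Rightarrow> (nat \<Rightarrow> nat set) \<Rightarrow> bool" where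
  "network n m src \<longleftrightarrow> (\<forall>s\<in>{1..n}. src s \<subseteq> {1..m})"

definition independent_parties :: "nat \<Rightarrow> (nat \<Rightarrow> nat set) \<Rightarrow> nat set \<Rightarrow> bool" where
  "independent_parties n src R \<longleftrightarrow>
     (\<forall>i\<in>R. \<forall>j\<in>R. i \<noteq> j \<longrightarrow> \<not> (\<exists>s\<in>{1..n}. i \<in> src s \<and> j \<in> src s))"

definition Gamma_net :: "nat \<Rightarrow> nat \<Rightarrow> (nat \<Rightarrow> nat set) \<Rightarrow> nat \<Rightarrow> nat set set" where
  "Gamma_net n m src h = {R. R \<subseteq> {1..m} \<and> card R = h \<and> independent_parties n src R}"

definition hmax :: "nat \<Rightarrow> nat \<Rightarrow> (nat \<Rightarrow> nat set) \<Rightarrow> nat" where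
  "hmax n m src = Max {h. Gamma_net n m src h \<noteq> {}}"

definition network_state ::
  "nat \<Rightarrow> nat \<Rightarrow> (nat \<Rightarrow> nat set) \<Rightarrow> (nat \<Rightarrow> ('h::complex_inner \<Rightarrow> 'h) set)
     \<Rightarrow> (('h \<Rightarrow> 'h) \<Rightarrow> complex) \<Rightarrow> bool" where
  "network_state n m src M tau \<longleftrightarrow>
     (\<forall>h. 2 \<le> h \<and> h \<le> hmax n m src \<longrightarrow>
        (\<forall>R\<in>Gamma_net n m src h. \<forall>A. (\<forall>k\<in>R. A k \<in> M k) \<longrightarrow>
            tau (prod_ops A R) = (\<Prod>k\<in>R. tau (A k))))"

definition mcvna_model ::
  "nat \<Rightarrow> nat \<Rightarrow> (nat \<Rightarrow> nat set) \<Rightarrow> (nat \<Rightarrow> ('h::complex_inner \<Rightarrow> 'h) set)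
     \<Rightarrow> (('h \<Rightarrow> 'h) \<Rightarrow> complex) \<Rightarrow> bool" where
  "mcvna_model n m src M tau \<longleftrightarrow>
     (\<forall>i\<in>{1..m}. von_neumann_algebra (M i)) \<and>
     (\<forall>i\<in>{1..m}. \<forall>j\<in>{1..m}. i \<noteq> j \<longrightarrow> M i \<subseteq> commutant (M j)) \<and>
     is_state (joint_vN M m) tau \<and>
     network_state n m src M tau"

definition observable_in :: "('h::complex_inner \<Rightarrow> 'h) set \<Rightarrow> ('h \<Rightarrow> 'h) \<Rightarrow> bool" where
  "observable_in M A \<longleftrightarrow> A \<in> M \<and> adj A = A \<and> op_le (op_scale (-1) id) A \<and> op_le A id"

definition I_tau :: "nat \<Rightarrow> nat set \<Rightarrow> (nat \<Rightarrow> ('h::complex_inner \<Rightarrow> 'h)) \<Rightarrow> (nat \<Rightarrow> ('h \<Rightarrow> 'h))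
     \<Rightarrow> (('h \<Rightarrow> 'h) \<Rightarrow> complex) \<Rightarrow> complex" where
  "I_tau m R A0 A1 tau =
     tau (prod_ops (\<lambda>i. if i \<in> R then op_plus (A0 i) (A1 i) else A0 i) {1..m})"

definition J_tau :: "nat \<Rightarrow> nat set \<Rightarrow> (nat \<Rightarrow> ('h::complex_inner \<Rightarrow> 'h)) \<Rightarrow> (nat \<Rightarrow> ('h \<Rightarrow> 'h))
     \<Rightarrow> (('h \<Rightarrow> 'h) \<Rightarrow> complex) \<Rightarrow> complex" where
  "J_tau m R A0 A1 tau =
     tau (prod_ops (\<lambda>i. if i \<in> R then op_minus (A0 i) (A1 i) else A1 i) {1..m})"

definition S_tau :: "nat \<Rightarrow> nat \<Rightarrow> nat set \<Rightarrow> (nat \<Rightarrow> ('h::complex_inner \<Rightarrow> 'h)) \<Rightarrow> (nat \<Rightarrow> ('h \<Rightarrow> 'h))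
     \<Rightarrow> (('h \<Rightarrow> 'h) \<Rightarrow> complex) \<Rightarrow> real" where
  "S_tau h m R A0 A1 tau =
     cmod (I_tau m R A0 A1 tau) powr (1 / real h) + cmod (J_tau m R A0 A1 tau) powr (1 / real h)"

end

theory Submission
  imports Defs
begin


lemma amgm:
  fixes x :: "'a \<Rightarrow> real"
  assumes "finite S" "S \<noteq> {}" "\<And>i. i \<in> S \<Longrightarrow> x i \<ge> 0"
  shows "(\<Prod>i\<in>S. x i) powr (1 / real (card S)) \<le> (\<Sum>i\<in>S. x i) / real (card S)"
proof (cases "\<exists>i\<in>S. x i = 0")
  case True
  then have "(\<Prod>i\<in>S. x i) = 0" using assms(1) by (metis prod_zero_iff)
  moreover have "(\<Sum>i\<in>S. x i) \<ge> 0" using assms(3) by (simp add: sum_nonneg)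
  ultimately show ?thesis by simp
next
  case False
  then have pos: "\<And>i. i \<in> S \<Longrightarrow> x i > 0" using assms(3) by force
  define n where "n = real (card S)"
  have n0: "n > 0" using assms(1,2) n_def by (simp add: card_gt_0_iff)
  have "(\<Sum>i\<in>S. (1/n) * ln (x i)) \<le> ln (\<Sum>i\<in>S. (1/n) *\<^sub>R x i)"
    apply (rule concave_on_sum[OF assms(1,2) ln_concave])
    using n0 pos by (auto simp: n_def)
  moreover have "(\<Sum>i\<in>S. (1/n) * ln (x i)) = ln (\<Prod>i\<in>S. x i) / n"
    using pos assms(1) by (subst ln_prod) (auto simp: sum_divide_distrib dest: pos)
  moreover have "(\<Sum>i\<in>S. (1/n) *\<^sub>R x i) = (\<Sum>i\<in>S. x i) / n"
    by (simp add: sum_divide_distrib)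
  ultimately have le: "ln (\<Prod>i\<in>S. x i) / n \<le> ln ((\<Sum>i\<in>S. x i) / n)" by simp
  have pp: "(\<Prod>i\<in>S. x i) > 0" using pos by (simp add: prod_pos)
  have sp: "(\<Sum>i\<in>S. x i) / n > 0" using pos n0 assms(1,2) by (simp add: sum_pos)
  have "(\<Prod>i\<in>S. x i) powr (1 / n) = exp (ln (\<Prod>i\<in>S. x i) / n)"
    using pp by (simp add: powr_def)
  also have "\<dots> \<le> exp (ln ((\<Sum>i\<in>S. x i) / n))" using le by simp
  also have "\<dots> = (\<Sum>i\<in>S. x i) / n" using sp by simp
  finally show ?thesis by (simp add: n_def)
qed

lemma sq_powr:
  fixes I a :: real assumes "I \<ge> 0"
  shows "(I powr a)^2 = (I^2) powr a"
proof (cases "I = 0")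
  case True then show ?thesis by simp
next
  case False
  then have I0: "I > 0" using assms by simp
  have "(I powr a)^2 = I powr (of_nat 2 * a)" using I0 by (subst powr_power) auto
  moreover have "I^2 = I powr (real 2)" using I0 by (subst powr_realpow) auto
  ultimately show ?thesis by (simp add: powr_powr)
qed

lemma final_real:
  fixes a b :: "nat \<Rightarrow> real" and I J :: real
  assumes "finite S" "S \<noteq> {}" "card S = h"
    and "\<And>i. i \<in> S \<Longrightarrow> a i \<ge> 0 \<and> b i \<ge> 0 \<and> a i + b i \<le> 4"
    and "I \<ge> 0" "J \<ge> 0" "I^2 \<le> (\<Prod>i\<in>S. a i)" "J^2 \<le> (\<Prod>i\<in>S. b i)"
  shows "I powr (1 / real h) + J powr (1 / real h) \<le> 2 * sqrt 2"
proof -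
  have h0: "real h > 0" using assms(1-3) card_gt_0_iff by fastforce
  define u where "u = I powr (1 / real h)"
  define v where "v = J powr (1 / real h)"
  have u0: "u \<ge> 0" and v0: "v \<ge> 0" by (simp_all add: u_def v_def)
  have "u^2 = (I^2) powr (1 / real h)"
    unfolding u_def by (rule sq_powr) (use assms in auto)
  also have "\<dots> \<le> (\<Prod>i\<in>S. a i) powr (1 / real h)"
    using assms(7) h0 by (intro powr_mono2) auto
  also have "\<dots> \<le> (\<Sum>i\<in>S. a i) / real h"
    using amgm[of S a] assms by auto
  finally have u2: "u^2 \<le> (\<Sum>i\<in>S. a i) / real h" .
  have "v^2 = (J^2) powr (1 / real h)"
    unfolding v_def by (rule sq_powr) (use assms in auto)
  also have "\<dots> \<le> (\<Prod>i\<in>S. b i) powr (1 / real h)"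
    using assms(8) h0 by (intro powr_mono2) auto
  also have "\<dots> \<le> (\<Sum>i\<in>S. b i) / real h"
    using amgm[of S b] assms by auto
  finally have v2: "v^2 \<le> (\<Sum>i\<in>S. b i) / real h" .
  have "(\<Sum>i\<in>S. a i) + (\<Sum>i\<in>S. b i) \<le> (\<Sum>i\<in>S. 4)"
    unfolding sum.distrib[symmetric] by (rule sum_mono) (use assms(4) in auto)
  then have "(\<Sum>i\<in>S. a i) + (\<Sum>i\<in>S. b i) \<le> 4 * real h" using assms(3) by simp
  then have "(\<Sum>i\<in>S. a i) / real h + (\<Sum>i\<in>S. b i) / real h \<le> 4"
    using h0 by (simp add: add_divide_distrib[symmetric] divide_le_eq)
  with u2 v2 have s: "u^2 + v^2 \<le> 4" by linarith
  have "(u + v)^2 \<le> 8" using s sum_squares_bound[of u v] by (simp add: power2_sum)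
  then have "u + v \<le> sqrt 8" using u0 v0 by (simp add: real_le_rsqrt)
  moreover have "sqrt 8 = 2 * sqrt (2::real)"
    by (metis real_sqrt_mult real_sqrt_four mult_2_right numeral_Bit0 numeral_times_numeral num_double)
  ultimately show ?thesis by (simp add: u_def v_def)
qed


section \<open>Scalar and inner product algebra\<close>

lemma scaleC_zero_right [simp]: "(c::complex) *\<^sub>C (0::'a::complex_vector) = 0"
proof -
  have "c *\<^sub>C (0::'a) = c *\<^sub>C 0 + c *\<^sub>C 0" by (metis add_0 scaleC_add_right)
  then show ?thesis by simp
qed

lemma scaleC_minus_right [simp]: "(c::complex) *\<^sub>C (- x::'a::complex_vector) = - (c *\<^sub>C x)"
proof -
  have "c *\<^sub>C x + c *\<^sub>C (- x) = 0" by (metis scaleC_add_right add.right_inverse scaleC_zero_right)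
  then show ?thesis by (simp add: eq_neg_iff_add_eq_0 add.commute)
qed

lemma scaleC_diff_right: "(c::complex) *\<^sub>C (x - y::'a::complex_vector) = c *\<^sub>C x - c *\<^sub>C y"
  by (metis diff_conv_add_uminus scaleC_add_right scaleC_minus_right)

lemma scaleC_of_real: "complex_of_real r *\<^sub>C (x::'a::complex_vector) = r *\<^sub>R x"
  by (simp add: scaleR_scaleC)

lemma scaleC_minus1 [simp]: "(-1::complex) *\<^sub>C (x::'a::complex_vector) = - x"
  using scaleR_scaleC[of "-1" x] by simp

lemma cinner_add_left: "cinner (x + y) (z::'a::complex_inner) = cinner x z + cinner y z"
  by (metis cinner_conj cinner_add_right complex_cnj_add)

lemma cinner_scaleC_left: "cinner (c *\<^sub>C x) (z::'a::complex_inner) = cnj c * cinner x z"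
  by (metis cinner_conj cinner_scaleC_right complex_cnj_mult)

lemma cinner_zero_right [simp]: "cinner (x::'a::complex_inner) 0 = 0"
proof -
  have "cinner x (0::'a) = cinner x 0 + cinner x 0" by (metis add_0 cinner_add_right)
  then show ?thesis by simp
qed

lemma cinner_zero_left [simp]: "cinner 0 (x::'a::complex_inner) = 0"
  by (metis cinner_conj cinner_zero_right complex_cnj_zero)

lemma cinner_minus_right [simp]: "cinner (x::'a::complex_inner) (- y) = - cinner x y"
proof -
  have "cinner x y + cinner x (- y) = 0" by (metis cinner_add_right add.right_inverse cinner_zero_right)
  then show ?thesis by (simp add: eq_neg_iff_add_eq_0 add.commute)
qed

lemma cinner_minus_left [simp]: "cinner (- x) (y::'a::complex_inner) = - cinner x y"
  by (metis cinner_conj cinner_minus_right complex_cnj_minus)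

lemma cinner_diff_right: "cinner (x::'a::complex_inner) (y - z) = cinner x y - cinner x z"
  using cinner_add_right[of x y "- z"] by simp

lemma cinner_diff_left: "cinner (x - y) (z::'a::complex_inner) = cinner x z - cinner y z"
  using cinner_add_left[of x "- y" z] by simp

lemma Im_cinner_self [simp]: "Im (cinner (x::'a::complex_inner) x) = 0"
proof -
  have "cinner x x = cnj (cinner x x)" by (rule cinner_conj)
  then have "Im (cinner x x) = Im (cnj (cinner x x))" by simp
  then have "Im (cinner x x) = - Im (cinner x x)" by simp
  then show ?thesis by simp
qed

lemma norm_sq_cinner: "(norm (x::'a::complex_inner))^2 = Re (cinner x x)"
  by (simp add: norm_eq_sqrt_cinner cinner_self_nonneg)

lemmas cinner_simps = cinner_add_left cinner_add_right cinner_scaleC_left cinner_scaleC_right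
  cinner_diff_left cinner_diff_right

section \<open>Linear operators\<close>

definition lin :: "('h::complex_inner \<Rightarrow> 'h) \<Rightarrow> bool" where
  "lin T \<longleftrightarrow> (\<forall>x y. T (x + y) = T x + T y) \<and> (\<forall>c x. T (c *\<^sub>C x) = c *\<^sub>C T x)"

lemma BH_lin: "T \<in> BH \<Longrightarrow> lin T"
  by (simp add: BH_def bounded_clinear_op_def lin_def)

lemma lin_add: "lin T \<Longrightarrow> T (x + y) = T x + T y" by (simp add: lin_def)
lemma lin_scale: "lin T \<Longrightarrow> T (c *\<^sub>C x) = c *\<^sub>C T x" by (simp add: lin_def)
lemma lin_zero: "lin T \<Longrightarrow> T 0 = 0"
  by (metis lin_add add_0 add_cancel_right_left)
lemma lin_minus: "lin T \<Longrightarrow> T (- x) = - T x"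
  by (metis lin_add lin_zero add.right_inverse eq_neg_iff_add_eq_0)
lemma lin_diff: "lin T \<Longrightarrow> T (x - y) = T x - T y"
  by (metis diff_conv_add_uminus lin_add lin_minus)
lemma lin_scaleR: "lin T \<Longrightarrow> T (r *\<^sub>R x) = r *\<^sub>R T x"
  by (simp add: scaleR_scaleC lin_scale)

lemma bounded_nonneg:
  assumes "\<exists>K. \<forall>x. norm (T x) \<le> norm x * K"
  shows "\<exists>K\<ge>0. \<forall>x. norm (T x) \<le> norm x * K"
proof -
  obtain K where K: "\<forall>x. norm (T x) \<le> norm x * K" using assms by blast
  have "\<forall>x. norm (T x) \<le> norm x * max K 0"
    by (metis K max.cobounded1 mult_left_mono norm_ge_zero order_trans)
  then show ?thesis by (meson max.cobounded2)
qed

lemma BH_bound: "T \<in> BH \<Longrightarrow> \<exists>K\<ge>0. \<forall>x. norm (T x) \<le> norm x * K"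
  by (rule bounded_nonneg) (simp add: BH_def bounded_clinear_op_def)

lemma BH_intro:
  assumes "lin T" "\<exists>K\<ge>0. \<forall>x. norm (T x) \<le> norm x * K"
  shows "T \<in> BH"
  using assms unfolding BH_def bounded_clinear_op_def lin_def by blast

lemma BH_id: "(id::'h::complex_inner \<Rightarrow> 'h) \<in> BH"
  by (rule BH_intro) (auto simp: lin_def intro!: exI[of _ 1])

lemma BH_comp:
  assumes "T \<in> BH" "S \<in> BH" shows "T \<circ> S \<in> BH"
proof (rule BH_intro)
  show "lin (T \<circ> S)" using BH_lin[OF assms(1)] BH_lin[OF assms(2)] by (simp add: lin_def)
  obtain K1 where K1: "K1 \<ge> 0" "\<forall>x. norm (T x) \<le> norm x * K1" using BH_bound[OF assms(1)] by blast
  obtain K2 where K2: "K2 \<ge> 0" "\<forall>x. norm (S x) \<le> norm x * K2" using BH_bound[OF assms(2)] by blast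
  have "\<forall>x. norm (T (S x)) \<le> norm x * (K2 * K1)"
  proof
    fix x
    have "norm (T (S x)) \<le> norm (S x) * K1" using K1 by blast
    also have "\<dots> \<le> norm x * K2 * K1" using K2 K1 by (simp add: mult_right_mono)
    finally show "norm (T (S x)) \<le> norm x * (K2 * K1)" by (simp add: mult.assoc)
  qed
  then show "\<exists>K\<ge>0. \<forall>x. norm ((T \<circ> S) x) \<le> norm x * K" using K1 K2 by (auto intro!: exI[of _ "K2 * K1"])
qed

lemma BH_plus:
  assumes "T \<in> BH" "S \<in> BH" shows "op_plus T S \<in> BH"
proof (rule BH_intro)
  show "lin (op_plus T S)" using BH_lin[OF assms(1)] BH_lin[OF assms(2)]
    by (simp add: lin_def op_plus_def scaleC_add_right algebra_simps)
  obtain K1 where K1: "K1 \<ge> 0" "\<forall>x. norm (T x) \<le> norm x * K1" using BH_bound[OF assms(1)] by blast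
  obtain K2 where K2: "K2 \<ge> 0" "\<forall>x. norm (S x) \<le> norm x * K2" using BH_bound[OF assms(2)] by blast
  have "\<forall>x. norm (T x + S x) \<le> norm x * (K1 + K2)"
    using norm_triangle_ineq K1(2) K2(2) by (smt (verit) distrib_left)
  then show "\<exists>K\<ge>0. \<forall>x. norm (op_plus T S x) \<le> norm x * K" using K1 K2 by (auto simp: op_plus_def intro!: exI[of _ "K1 + K2"])
qed

lemma BH_minus:
  assumes "T \<in> BH" "S \<in> BH" shows "op_minus T S \<in> BH"
proof (rule BH_intro)
  show "lin (op_minus T S)" using BH_lin[OF assms(1)] BH_lin[OF assms(2)]
    by (simp add: lin_def op_minus_def scaleC_diff_right algebra_simps)
  obtain K1 where K1: "K1 \<ge> 0" "\<forall>x. norm (T x) \<le> norm x * K1" using BH_bound[OF assms(1)] by blast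
  obtain K2 where K2: "K2 \<ge> 0" "\<forall>x. norm (S x) \<le> norm x * K2" using BH_bound[OF assms(2)] by blast
  have "\<forall>x. norm (T x - S x) \<le> norm x * (K1 + K2)"
    using norm_triangle_ineq4 K1(2) K2(2) by (smt (verit) distrib_left)
  then show "\<exists>K\<ge>0. \<forall>x. norm (op_minus T S x) \<le> norm x * K" using K1 K2 by (auto simp: op_minus_def intro!: exI[of _ "K1 + K2"])
qed

lemma BH_scale_real:
  assumes "T \<in> BH" shows "op_scale (complex_of_real t) T \<in> BH"
proof (rule BH_intro)
  show "lin (op_scale (complex_of_real t) T)" using BH_lin[OF assms(1)]
    by (simp add: lin_def op_scale_def scaleC_add_right scaleC_scaleC mult.commute)
  obtain K1 where K1: "K1 \<ge> 0" "\<forall>x. norm (T x) \<le> norm x * K1" using BH_bound[OF assms(1)] by blast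
  have "\<forall>x. norm (t *\<^sub>R T x) \<le> norm x * (\<bar>t\<bar> * K1)"
  proof
    fix x
    have "norm (t *\<^sub>R T x) = \<bar>t\<bar> * norm (T x)" by simp
    also have "\<dots> \<le> \<bar>t\<bar> * (norm x * K1)" using K1 by (simp add: mult_left_mono)
    finally show "norm (t *\<^sub>R T x) \<le> norm x * (\<bar>t\<bar> * K1)" by (simp add: algebra_simps)
  qed
  then show "\<exists>K\<ge>0. \<forall>x. norm (op_scale (complex_of_real t) T x) \<le> norm x * K"
    using K1 by (auto simp: op_scale_def scaleC_of_real intro!: exI[of _ "\<bar>t\<bar> * K1"])
qed

section \<open>Commutants\<close>

lemma commutant_BH: "commutant S \<subseteq> BH" by (auto simp: commutant_def)

lemma commutant_comm: "T \<in> commutant S \<Longrightarrow> A \<in> S \<Longrightarrow> T \<circ> A = A \<circ> T"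
  by (auto simp: commutant_def)

lemma commutant_id: "(id::'h::complex_inner \<Rightarrow> 'h) \<in> commutant S"
  by (auto simp: commutant_def BH_id)

lemma commutant_comp:
  assumes "T \<in> commutant S" "U \<in> commutant S" shows "T \<circ> U \<in> commutant S"
  using assms unfolding commutant_def
  by (auto intro: BH_comp) (metis comp_assoc)

lemma commutant_plus:
  assumes "S \<subseteq> BH" "T \<in> commutant S" "U \<in> commutant S" shows "op_plus T U \<in> commutant S"
proof -
  have "\<forall>A\<in>S. op_plus T U \<circ> A = A \<circ> op_plus T U"
  proof
    fix A assume A: "A \<in> S"
    then have "lin A" using assms(1) BH_lin by blast
    moreover have "T \<circ> A = A \<circ> T" "U \<circ> A = A \<circ> U" using assms A by (auto simp: commutant_def)
    ultimately show "op_plus T U \<circ> A = A \<circ> op_plus T U"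
      by (auto simp: op_plus_def fun_eq_iff lin_add)
  qed
  then show ?thesis using assms by (auto simp: commutant_def BH_plus)
qed

lemma commutant_minus:
  assumes "S \<subseteq> BH" "T \<in> commutant S" "U \<in> commutant S" shows "op_minus T U \<in> commutant S"
proof -
  have "\<forall>A\<in>S. op_minus T U \<circ> A = A \<circ> op_minus T U"
  proof
    fix A assume A: "A \<in> S"
    then have "lin A" using assms(1) BH_lin by blast
    moreover have "T \<circ> A = A \<circ> T" "U \<circ> A = A \<circ> U" using assms A by (auto simp: commutant_def)
    ultimately show "op_minus T U \<circ> A = A \<circ> op_minus T U"
      by (auto simp: op_minus_def fun_eq_iff lin_diff)
  qed
  then show ?thesis using assms by (auto simp: commutant_def BH_minus)
qed

lemma commutant_scale:
  assumes "S \<subseteq> BH" "T \<in> commutant S" shows "op_scale (complex_of_real t) T \<in> commutant S"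
proof -
  have "\<forall>A\<in>S. op_scale (complex_of_real t) T \<circ> A = A \<circ> op_scale (complex_of_real t) T"
  proof
    fix A assume A: "A \<in> S"
    then have "lin A" using assms(1) BH_lin by blast
    moreover have "T \<circ> A = A \<circ> T" using assms A by (auto simp: commutant_def)
    ultimately show "op_scale (complex_of_real t) T \<circ> A = A \<circ> op_scale (complex_of_real t) T"
      by (auto simp: op_scale_def fun_eq_iff lin_scale)
  qed
  then show ?thesis using assms by (auto simp: commutant_def BH_scale_real)
qed



definition symm :: "('h::complex_inner \<Rightarrow> 'h) \<Rightarrow> bool" where
  "symm T \<longleftrightarrow> (\<forall>x y. cinner (T x) y = cinner x (T y))"

definition contr :: "('h::complex_inner \<Rightarrow> 'h) \<Rightarrow> bool" where
  "contr T \<longleftrightarrow> (\<forall>x. norm (T x) \<le> norm x)"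

lemma symm_id: "symm id" by (simp add: symm_def)
lemma contr_id: "contr id" by (simp add: contr_def)
lemma contr_comp: "contr T \<Longrightarrow> contr S \<Longrightarrow> contr (T \<circ> S)"
  unfolding contr_def by (metis comp_apply order_trans)

lemma symm_plus: "symm T \<Longrightarrow> symm S \<Longrightarrow> symm (op_plus T S)"
  by (simp add: symm_def op_plus_def cinner_add_left cinner_add_right)

lemma symm_minus: "symm T \<Longrightarrow> symm S \<Longrightarrow> symm (op_minus T S)"
  by (simp add: symm_def op_minus_def cinner_diff_left cinner_diff_right)

lemma symm_scale: "symm T \<Longrightarrow> symm (op_scale (complex_of_real t) T)"
  by (simp add: symm_def op_scale_def cinner_scaleC_left cinner_scaleC_right)

lemma symm_comp: "symm T \<Longrightarrow> symm S \<Longrightarrow> T \<circ> S = S \<circ> T \<Longrightarrow> symm (T \<circ> S)"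
  unfolding symm_def by (metis comp_apply)

lemma pos_sq: "symm T \<Longrightarrow> pos_op (T \<circ> T)"
  unfolding pos_op_def symm_def by (metis comp_apply Im_cinner_self cinner_self_nonneg)

lemma pos_id_minus_sq:
  assumes "symm T" "contr T" shows "pos_op (op_minus id (T \<circ> T))"
  unfolding pos_op_def
proof
  fix x
  have e: "cinner x (op_minus id (T \<circ> T) x) = cinner x x - cinner (T x) (T x)"
    using assms(1) by (simp add: op_minus_def cinner_diff_right symm_def)
  have "(norm (T x))^2 \<le> (norm x)^2" using assms(2) by (simp add: contr_def power_mono)
  then have "Re (cinner (T x) (T x)) \<le> Re (cinner x x)" by (simp add: norm_sq_cinner)
  then show "Im (cinner x (op_minus id (T \<circ> T) x)) = 0 \<and> 0 \<le> Re (cinner x (op_minus id (T \<circ> T) x))"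
    using e by simp
qed

lemma polarization:
  assumes "lin A" "\<And>x. Im (cinner x (A x)) = 0"
  shows "symm A"
  unfolding symm_def
proof (intro allI)
  fix x y
  have e1: "cinner (x + y) (A (x + y)) = cinner x (A x) + cinner x (A y) + cinner y (A x) + cinner y (A y)"
    using assms(1) by (simp add: lin_add cinner_add_left cinner_add_right)
  have e2: "cinner (x + \<i> *\<^sub>C y) (A (x + \<i> *\<^sub>C y)) =
      cinner x (A x) + \<i> * cinner x (A y) - \<i> * cinner y (A x) + cinner y (A y)"
    using assms(1) by (simp add: lin_add lin_scale cinner_add_left cinner_add_right
        cinner_scaleC_left cinner_scaleC_right algebra_simps)
  have i1: "Im (cinner x (A y)) + Im (cinner y (A x)) = 0"
    using arg_cong[OF e1, of Im] assms(2)[of "x + y"] assms(2)[of x] assms(2)[of y] by simp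
  have i2: "Re (cinner x (A y)) - Re (cinner y (A x)) = 0"
    using arg_cong[OF e2, of Im] assms(2)[of "x + \<i> *\<^sub>C y"] assms(2)[of x] assms(2)[of y] by simp
  have "cinner x (A y) = cnj (cinner y (A x))"
    using i1 i2 by (simp add: complex_eq_iff)
  then show "cinner (A x) y = cinner x (A y)" by (metis cinner_conj)
qed

lemma contraction:
  assumes "lin A" "symm A" "\<And>x. \<bar>Re (cinner x (A x))\<bar> \<le> Re (cinner x x)"
  shows "contr A"
  unfolding contr_def
proof
  fix x
  define y where "y = A x"
  have e: "cinner (x + y) (A (x + y)) - cinner (x - y) (A (x - y)) = 2 * cinner x (A y) + 2 * cinner y (A x)"
  proof -
    have a: "cinner (x+y) (A (x+y)) = cinner x (A x) + cinner x (A y) + (cinner y (A x) + cinner y (A y))"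
      using assms(1) by (simp add: lin_add cinner_add_left cinner_add_right)
    have b: "cinner (x-y) (A (x-y)) = cinner x (A x) - cinner x (A y) - (cinner y (A x) - cinner y (A y))"
      using assms(1) by (simp add: lin_diff cinner_diff_left cinner_diff_right)
    show ?thesis unfolding a b by (simp add: algebra_simps)
  qed
  have s: "cinner x (A y) = cinner y y" using assms(2) by (simp add: symm_def y_def)
  have e': "Re (cinner (x + y) (A (x + y))) - Re (cinner (x - y) (A (x - y))) = 4 * Re (cinner y y)"
    using arg_cong[OF e, of Re] s by (simp add: y_def)
  have p: "Re (cinner (x + y) (x + y)) + Re (cinner (x - y) (x - y)) = 2 * Re (cinner x x) + 2 * Re (cinner y y)"
    by (simp add: cinner_add_left cinner_add_right cinner_diff_left cinner_diff_right)
  have "Re (cinner (x + y) (A (x + y))) \<le> Re (cinner (x + y) (x + y))" using assms(3)[of "x+y"] by simp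
  moreover have "- Re (cinner (x - y) (A (x - y))) \<le> Re (cinner (x - y) (x - y))" using assms(3)[of "x-y"] by simp
  ultimately have "Re (cinner y y) \<le> Re (cinner x x)" using e' p by linarith
  then have "(norm y)^2 \<le> (norm x)^2" by (simp add: norm_sq_cinner)
  then show "norm (A x) \<le> norm x" unfolding y_def by (rule power2_le_imp_le) simp
qed

lemma observable_props:
  assumes "observable_in M A" "M \<subseteq> BH"
  shows "lin A" "symm A" "contr A"
proof -
  show l: "lin A" using assms by (auto simp: observable_in_def BH_lin)
  have up: "Im (cinner x (A x)) = 0 \<and> Re (cinner x (A x)) \<le> Re (cinner x x)" for x
    using assms(1) unfolding observable_in_def op_le_def pos_op_def
    by (auto simp: op_minus_def cinner_diff_right dest!: spec[of _ x])
  have lo: "- Re (cinner x x) \<le> Re (cinner x (A x))" for x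
    using assms(1) unfolding observable_in_def op_le_def pos_op_def
    by (auto simp: op_minus_def op_scale_def cinner_add_right dest!: spec[of _ x])
  show s: "symm A" using polarization[OF l] up by blast
  show "contr A" using contraction[OF l s] up lo by (simp add: abs_le_iff) (meson minus_le_iff)
qed



definition pcomm :: "(nat \<Rightarrow> ('h \<Rightarrow> 'h)) \<Rightarrow> nat set \<Rightarrow> bool" where
  "pcomm f S \<longleftrightarrow> (\<forall>i\<in>S. \<forall>j\<in>S. i \<noteq> j \<longrightarrow> f i \<circ> f j = f j \<circ> f i)"

lemma foldr_insort_comm:
  assumes "\<forall>x\<in>set xs. f a \<circ> f x = f x \<circ> f a"
  shows "foldr (\<lambda>i acc. f i \<circ> acc) (insort a xs) id = f a \<circ> foldr (\<lambda>i acc. f i \<circ> acc) xs id"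
  using assms
proof (induction xs)
  case Nil then show ?case by simp
next
  case (Cons x xs)
  show ?case
  proof (cases "a \<le> x")
    case True then show ?thesis by simp
  next
    case False
    let ?F = "\<lambda>i acc. f i \<circ> acc"
    have fa: "f a \<circ> f x = f x \<circ> f a" using Cons.prems by (meson list.set_intros(1))
    have IH: "foldr ?F (insort a xs) id = f a \<circ> foldr ?F xs id"
      by (rule Cons.IH) (use Cons.prems in \<open>meson list.set_intros(2)\<close>)
    have "foldr ?F (insort a (x # xs)) id = f x \<circ> foldr ?F (insort a xs) id"
      using False by (simp only: insort_key.simps id_apply if_False foldr_Cons comp_apply)
    also have "\<dots> = f x \<circ> (f a \<circ> foldr ?F xs id)" by (simp only: IH)
    also have "\<dots> = (f x \<circ> f a) \<circ> foldr ?F xs id" by (simp only: comp_assoc)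
    also have "\<dots> = (f a \<circ> f x) \<circ> foldr ?F xs id" by (simp only: fa)
    also have "\<dots> = f a \<circ> foldr ?F (x # xs) id" by (simp only: comp_assoc foldr_Cons comp_apply)
    finally show ?thesis .
  qed
qed

lemma prod_ops_empty [simp]: "prod_ops f {} = id"
  by (simp add: prod_ops_def)

lemma prod_ops_insert:
  assumes "finite S" "a \<notin> S" "\<forall>j\<in>S. f a \<circ> f j = f j \<circ> f a"
  shows "prod_ops f (insert a S) = f a \<circ> prod_ops f S"
  unfolding prod_ops_def using assms
  by (simp add: sorted_list_of_set_insert foldr_insort_comm)

lemma prod_ops_cong: "(\<And>i. i \<in> S \<Longrightarrow> f i = g i) \<Longrightarrow> prod_ops f S = prod_ops g S"
proof (cases "finite S")
  case True
  assume a: "\<And>i. i \<in> S \<Longrightarrow> f i = g i"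
  show ?thesis unfolding prod_ops_def by (rule foldr_cong) (use True a in auto)
next
  case False then show ?thesis by (simp add: prod_ops_def)
qed

lemma foldr_comm:
  assumes "\<forall>j\<in>set xs. T \<circ> f j = f j \<circ> T"
  shows "T \<circ> foldr (\<lambda>i acc. f i \<circ> acc) xs id = foldr (\<lambda>i acc. f i \<circ> acc) xs id \<circ> T"
  using assms
proof (induction xs)
  case Nil then show ?case by simp
next
  case (Cons x xs)
  let ?F = "\<lambda>i acc. f i \<circ> acc"
  have fx: "T \<circ> f x = f x \<circ> T" using Cons.prems by (meson list.set_intros(1))
  have IH: "T \<circ> foldr ?F xs id = foldr ?F xs id \<circ> T"
    by (rule Cons.IH) (use Cons.prems in \<open>meson list.set_intros(2)\<close>)
  have "T \<circ> foldr ?F (x # xs) id = (T \<circ> f x) \<circ> foldr ?F xs id"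
    by (simp only: comp_assoc foldr_Cons comp_apply)
  also have "\<dots> = f x \<circ> (T \<circ> foldr ?F xs id)" by (simp only: fx comp_assoc)
  also have "\<dots> = f x \<circ> (foldr ?F xs id \<circ> T)" by (simp only: IH)
  also have "\<dots> = foldr ?F (x # xs) id \<circ> T" by (simp only: comp_assoc foldr_Cons comp_apply)
  finally show ?case .
qed

lemma prod_ops_comm:
  assumes "finite S" "\<forall>j\<in>S. T \<circ> f j = f j \<circ> T"
  shows "T \<circ> prod_ops f S = prod_ops f S \<circ> T"
  unfolding prod_ops_def using assms by (intro foldr_comm) simp

lemma foldr_closed:
  assumes "\<forall>i\<in>set xs. f i \<in> C" "id \<in> C" "\<forall>a\<in>C. \<forall>b\<in>C. a \<circ> b \<in> C"
  shows "foldr (\<lambda>i acc. f i \<circ> acc) xs id \<in> C"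
  using assms by (induction xs) auto

lemma prod_ops_closed:
  assumes "finite S" "\<forall>i\<in>S. f i \<in> C" "id \<in> C" "\<forall>a\<in>C. \<forall>b\<in>C. a \<circ> b \<in> C"
  shows "prod_ops f S \<in> C"
  unfolding prod_ops_def using assms by (intro foldr_closed) auto

lemma pcomm_subset: "pcomm f S \<Longrightarrow> T \<subseteq> S \<Longrightarrow> pcomm f T"
  unfolding pcomm_def by blast

lemma prod_ops_symm:
  assumes "finite S" "pcomm f S" "\<forall>i\<in>S. symm (f i)"
  shows "symm (prod_ops f S)"
  using assms
proof (induction S rule: finite_induct)
  case empty then show ?case by (simp add: symm_def)
next
  case (insert a S)
  have c: "\<forall>j\<in>S. f a \<circ> f j = f j \<circ> f a" using insert.prems insert.hyps unfolding pcomm_def by auto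
  have "symm (prod_ops f S)" using insert pcomm_subset[of f "insert a S" S] by auto
  moreover have "f a \<circ> prod_ops f S = prod_ops f S \<circ> f a" using prod_ops_comm[OF insert.hyps(1) c] .
  ultimately have "symm (f a \<circ> prod_ops f S)" using insert.prems by (intro symm_comp) auto
  then show ?case unfolding prod_ops_insert[OF insert.hyps(1,2) c] .
qed

lemma prod_ops_split:
  assumes "finite S1" "finite S2" "S1 \<inter> S2 = {}" "pcomm f (S1 \<union> S2)"
  shows "prod_ops f (S1 \<union> S2) = prod_ops f S1 \<circ> prod_ops f S2"
  using assms
proof (induction S1 rule: finite_induct)
  case empty then show ?case by simp
next
  case (insert a S)
  have c1: "\<forall>j\<in>S \<union> S2. f a \<circ> f j = f j \<circ> f a" using insert unfolding pcomm_def by auto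
  have c2: "\<forall>j\<in>S. f a \<circ> f j = f j \<circ> f a" using c1 by auto
  have ih: "prod_ops f (S \<union> S2) = prod_ops f S \<circ> prod_ops f S2"
    by (rule insert.IH) (use insert.prems pcomm_subset[OF insert.prems(3), of "S \<union> S2"] in auto)
  have "prod_ops f (insert a S \<union> S2) = prod_ops f (insert a (S \<union> S2))" by simp
  also have "\<dots> = f a \<circ> prod_ops f (S \<union> S2)"
    using insert by (intro prod_ops_insert c1) auto
  also have "\<dots> = prod_ops f (insert a S) \<circ> prod_ops f S2"
    using ih prod_ops_insert[OF insert.hyps(1,2) c2] by (simp add: comp_assoc)
  finally show ?case .
qed

lemma prod_ops_square:
  assumes "finite S" "pcomm g S"
  shows "prod_ops (\<lambda>i. g i \<circ> g i) S = prod_ops g S \<circ> prod_ops g S"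
  using assms
proof (induction S rule: finite_induct)
  case empty then show ?case by simp
next
  case (insert a S)
  have c: "\<forall>j\<in>S. g a \<circ> g j = g j \<circ> g a" using insert unfolding pcomm_def by auto
  have c2: "\<forall>j\<in>S. (g a \<circ> g a) \<circ> (g j \<circ> g j) = (g j \<circ> g j) \<circ> (g a \<circ> g a)"
  proof
    fix j assume "j \<in> S"
    then have e: "g a \<circ> g j = g j \<circ> g a" using c by auto
    have "(g a \<circ> g a) \<circ> (g j \<circ> g j) = g a \<circ> (g a \<circ> g j) \<circ> g j" by (simp only: comp_assoc)
    also have "\<dots> = g a \<circ> (g j \<circ> g a) \<circ> g j" by (simp only: e)
    also have "\<dots> = (g a \<circ> g j) \<circ> (g a \<circ> g j)" by (simp only: comp_assoc)
    also have "\<dots> = (g j \<circ> g a) \<circ> (g j \<circ> g a)" by (simp only: e)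
    also have "\<dots> = g j \<circ> (g a \<circ> g j) \<circ> g a" by (simp only: comp_assoc)
    also have "\<dots> = g j \<circ> (g j \<circ> g a) \<circ> g a" by (simp only: e)
    also have "\<dots> = (g j \<circ> g j) \<circ> (g a \<circ> g a)" by (simp only: comp_assoc)
    finally show "(g a \<circ> g a) \<circ> (g j \<circ> g j) = (g j \<circ> g j) \<circ> (g a \<circ> g a)" .
  qed
  have ih: "prod_ops (\<lambda>i. g i \<circ> g i) S = prod_ops g S \<circ> prod_ops g S"
    by (rule insert.IH) (rule pcomm_subset[OF insert.prems], blast)
  have q: "g a \<circ> prod_ops g S = prod_ops g S \<circ> g a" using prod_ops_comm[OF insert.hyps(1) c] .
  have "prod_ops (\<lambda>i. g i \<circ> g i) (insert a S) = (g a \<circ> g a) \<circ> prod_ops (\<lambda>i. g i \<circ> g i) S"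
    using prod_ops_insert[OF insert.hyps(1,2), of "\<lambda>i. g i \<circ> g i"] c2 by simp
  also have "\<dots> = g a \<circ> (g a \<circ> prod_ops g S) \<circ> prod_ops g S" using ih by (simp add: comp_assoc)
  also have "\<dots> = g a \<circ> (prod_ops g S \<circ> g a) \<circ> prod_ops g S" by (simp only: q)
  also have "\<dots> = (g a \<circ> prod_ops g S) \<circ> (g a \<circ> prod_ops g S)" by (simp only: comp_assoc)
  also have "\<dots> = prod_ops g (insert a S) \<circ> prod_ops g (insert a S)"
    using prod_ops_insert[OF insert.hyps(1,2) c] by simp
  finally show ?case .
qed



lemma discr:
  fixes a b c :: real
  assumes "a \<ge> 0" "c \<ge> 0" "\<And>t. a * t^2 + 2 * b * t + c \<ge> 0"
  shows "b^2 \<le> a * c"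
proof (cases "a = 0")
  case True
  show ?thesis
  proof (cases "b = 0")
    case False
    have "a * (-(c+1)/(2*b))^2 + 2 * b * (-(c+1)/(2*b)) + c \<ge> 0" by (rule assms(3))
    then have "- (c + 1) + c \<ge> 0" using True False by (simp add: field_simps)
    then show ?thesis by simp
  qed (use assms in simp)
next
  case False
  then have a0: "a > 0" using assms(1) by simp
  have "a * (-b/a)^2 + 2 * b * (-b/a) + c \<ge> 0" by (rule assms(3))
  then have "b^2/a - 2 * b^2 / a + c \<ge> 0" using a0 by (simp add: power2_eq_square field_simps)
  then have "c - b^2/a \<ge> 0" by (simp add: field_simps)
  then have "b^2 / a \<le> c" by simp
  then show ?thesis using a0 by (simp add: divide_le_eq mult.commute)
qed

lemma state_plus: "is_state N tau \<Longrightarrow> A \<in> N \<Longrightarrow> B \<in> N \<Longrightarrow> tau (op_plus A B) = tau A + tau B"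
  by (simp add: is_state_def)

lemma state_scale: "is_state N tau \<Longrightarrow> A \<in> N \<Longrightarrow> tau (op_scale c A) = c * tau A"
  by (simp add: is_state_def)

lemma state_pos: "is_state N tau \<Longrightarrow> P \<in> N \<Longrightarrow> pos_op P \<Longrightarrow> Im (tau P) = 0 \<and> 0 \<le> Re (tau P)"
  by (simp add: is_state_def)

lemma state_id: "is_state N tau \<Longrightarrow> tau id = 1"
  by (simp add: is_state_def)

lemma state_minus:
  assumes "is_state N tau" "A \<in> N" "B \<in> N" "op_minus A B \<in> N"
  shows "tau (op_minus A B) = tau A - tau B"
proof -
  have "op_plus (op_minus A B) B = A" by (simp add: op_plus_def op_minus_def)
  then have "tau A = tau (op_minus A B) + tau B" using state_plus[OF assms(1,4,3)] by simp
  then show ?thesis by simp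
qed

lemma cauchy_schwarz:
  assumes st: "is_state N tau"
    and cl_plus: "\<And>A B. A \<in> N \<Longrightarrow> B \<in> N \<Longrightarrow> op_plus A B \<in> N"
    and cl_scale: "\<And>A t. A \<in> N \<Longrightarrow> op_scale (complex_of_real t) A \<in> N"
    and cl_comp: "\<And>A B. A \<in> N \<Longrightarrow> B \<in> N \<Longrightarrow> A \<circ> B \<in> N"
    and P: "P \<in> N" "lin P" "symm P"
    and X: "X \<in> N" "lin X" "symm X"
    and c: "P \<circ> X = X \<circ> P"
  shows "(cmod (tau (P \<circ> X)))^2 \<le> Re (tau (P \<circ> P)) * Re (tau (X \<circ> X))"
proof -
  have PP: "P \<circ> P \<in> N" and PX: "P \<circ> X \<in> N" and XX: "X \<circ> X \<in> N" using P X cl_comp by auto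
  have pPP: "Im (tau (P \<circ> P)) = 0 \<and> 0 \<le> Re (tau (P \<circ> P))" using state_pos[OF st PP pos_sq[OF P(3)]] .
  have pXX: "Im (tau (X \<circ> X)) = 0 \<and> 0 \<le> Re (tau (X \<circ> X))" using state_pos[OF st XX pos_sq[OF X(3)]] .
  have quad: "Im (tau (op_plus (op_scale (complex_of_real t) P) X \<circ> op_plus (op_scale (complex_of_real t) P) X)) = 0 \<and>
      tau (op_plus (op_scale (complex_of_real t) P) X \<circ> op_plus (op_scale (complex_of_real t) P) X)
      = complex_of_real (t^2) * tau (P \<circ> P) + complex_of_real (2 * t) * tau (P \<circ> X) + tau (X \<circ> X)
      \<and> 0 \<le> Re (tau (op_plus (op_scale (complex_of_real t) P) X \<circ> op_plus (op_scale (complex_of_real t) P) X))" for t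
  proof -
    define Z where "Z = op_plus (op_scale (complex_of_real t) P) X"
    have ZN: "Z \<in> N" unfolding Z_def using P X cl_plus cl_scale by auto
    have Zs: "symm Z" unfolding Z_def using P X by (intro symm_plus symm_scale) auto
    have ZZN: "Z \<circ> Z \<in> N" using ZN cl_comp by auto
    have eq: "Z \<circ> Z = op_plus (op_plus (op_scale (complex_of_real (t^2)) (P \<circ> P))
                 (op_scale (complex_of_real (2 * t)) (P \<circ> X))) (X \<circ> X)"
    proof
      fix x
      have xp: "X (P x) = P (X x)" using c by (metis comp_apply)
      show "(Z \<circ> Z) x = op_plus (op_plus (op_scale (complex_of_real (t^2)) (P \<circ> P))
                 (op_scale (complex_of_real (2 * t)) (P \<circ> X))) (X \<circ> X) x"
        unfolding Z_def using P(2) X(2) xp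
        by (simp only: op_plus_def op_scale_def scaleC_of_real comp_apply)
          (simp add: lin_add lin_scaleR scaleR_add_right power2_eq_square algebra_simps scaleR_2 flip: scaleR_add_left)
    qed
    have "tau (Z \<circ> Z) = complex_of_real (t^2) * tau (P \<circ> P) + complex_of_real (2 * t) * tau (P \<circ> X) + tau (X \<circ> X)"
    proof -
      have s1: "op_scale (complex_of_real (t^2)) (P \<circ> P) \<in> N" by (rule cl_scale[OF PP])
      have s2: "op_scale (complex_of_real (2 * t)) (P \<circ> X) \<in> N" by (rule cl_scale[OF PX])
      have s12: "op_plus (op_scale (complex_of_real (t^2)) (P \<circ> P)) (op_scale (complex_of_real (2 * t)) (P \<circ> X)) \<in> N"
        by (rule cl_plus[OF s1 s2])
      show ?thesis unfolding eq
        by (simp only: state_plus[OF st s12 XX] state_plus[OF st s1 s2] state_scale[OF st PP] state_scale[OF st PX])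
    qed
    moreover have "Im (tau (Z \<circ> Z)) = 0 \<and> 0 \<le> Re (tau (Z \<circ> Z))" using state_pos[OF st ZZN pos_sq[OF Zs]] .
    ultimately show ?thesis unfolding Z_def by simp
  qed
  have im: "Im (tau (P \<circ> X)) = 0"
  proof -
    from quad[of 1] have q1: "Im (tau (op_plus (op_scale (complex_of_real 1) P) X \<circ> op_plus (op_scale (complex_of_real 1) P) X)) = 0"
      and q2: "tau (op_plus (op_scale (complex_of_real 1) P) X \<circ> op_plus (op_scale (complex_of_real 1) P) X)
      = complex_of_real (1^2) * tau (P \<circ> P) + complex_of_real (2 * 1) * tau (P \<circ> X) + tau (X \<circ> X)"
      by blast+
    have "Im (complex_of_real (1^2) * tau (P \<circ> P) + complex_of_real (2 * 1) * tau (P \<circ> X) + tau (X \<circ> X)) = 0"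
      using q1 unfolding q2 .
    then show ?thesis using pPP pXX by simp
  qed
  have "\<And>t. Re (tau (P \<circ> P)) * t^2 + 2 * Re (tau (P \<circ> X)) * t + Re (tau (X \<circ> X)) \<ge> 0"
  proof -
    fix t
    show "Re (tau (P \<circ> P)) * t^2 + 2 * Re (tau (P \<circ> X)) * t + Re (tau (X \<circ> X)) \<ge> 0"
    proof -
      from quad[of t] have q3: "0 \<le> Re (tau (op_plus (op_scale (complex_of_real t) P) X \<circ> op_plus (op_scale (complex_of_real t) P) X))"
        and q2: "tau (op_plus (op_scale (complex_of_real t) P) X \<circ> op_plus (op_scale (complex_of_real t) P) X)
        = complex_of_real (t^2) * tau (P \<circ> P) + complex_of_real (2 * t) * tau (P \<circ> X) + tau (X \<circ> X)"
        by blast+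
      have "0 \<le> Re (complex_of_real (t^2) * tau (P \<circ> P) + complex_of_real (2 * t) * tau (P \<circ> X) + tau (X \<circ> X))"
        using q3 unfolding q2 .
      then show ?thesis by (simp add: algebra_simps)
    qed
  qed
  then have "(Re (tau (P \<circ> X)))^2 \<le> Re (tau (P \<circ> P)) * Re (tau (X \<circ> X))"
    using discr pPP pXX by blast
  moreover have "cmod (tau (P \<circ> X)) = \<bar>Re (tau (P \<circ> X))\<bar>" using im by (simp add: cmod_def)
  ultimately show ?thesis by simp
qed



lemma commutant_sub: "S \<subseteq> commutant (commutant S) \<longleftrightarrow> S \<subseteq> BH"
  by (auto simp: commutant_def)

lemma prod_of_real_parts:
  assumes "finite R" "\<And>k. k \<in> R \<Longrightarrow> Im (z k) = 0"
  shows "(\<Prod>k\<in>R. z k) = complex_of_real (\<Prod>k\<in>R. Re (z k))"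
proof -
  have "(\<Prod>k\<in>R. z k) = (\<Prod>k\<in>R. complex_of_real (Re (z k)))"
    using assms(2) by (intro prod.cong) (auto simp: complex_eq_iff)
  then show ?thesis by simp
qed

theorem theorem3p1:
  fixes n m h :: nat
    and src :: "nat \<Rightarrow> nat set"
    and M :: "nat \<Rightarrow> ('h::chilbert_space \<Rightarrow> 'h) set"
    and tau :: "('h \<Rightarrow> 'h) \<Rightarrow> complex"
    and A0 A1 :: "nat \<Rightarrow> ('h \<Rightarrow> 'h)"
    and R :: "nat set"
  assumes "network n m src"
    and "mcvna_model n m src M tau"
    and "2 \<le> h" and "h \<le> hmax n m src"
    and "R \<in> Gamma_net n m src h"
    and "\<forall>i\<in>{1..m}. observable_in (M i) (A0 i) \<and> observable_in (M i) (A1 i)"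
  shows "S_tau h m R A0 A1 tau \<le> 2 * sqrt 2"
proof -
  define N where "N = joint_vN M m"
  define U where "U = (\<Union>i\<in>{1..m}. M i)"
  have vN: "\<And>i. i \<in> {1..m} \<Longrightarrow> von_neumann_algebra (M i)" using assms(2) by (simp add: mcvna_model_def)
  have MBH: "\<And>i. i \<in> {1..m} \<Longrightarrow> M i \<subseteq> BH" using vN by (simp add: von_neumann_algebra_def)
  have Mcc: "\<And>i. i \<in> {1..m} \<Longrightarrow> commutant (commutant (M i)) = M i" using vN by (simp add: von_neumann_algebra_def)
  have comm: "\<And>i j. i \<in> {1..m} \<Longrightarrow> j \<in> {1..m} \<Longrightarrow> i \<noteq> j \<Longrightarrow> M i \<subseteq> commutant (M j)"
    using assms(2) by (simp add: mcvna_model_def)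
  have st: "is_state N tau" using assms(2) by (simp add: mcvna_model_def N_def)
  have ns: "network_state n m src M tau" using assms(2) by (simp add: mcvna_model_def)
  have Rsub: "R \<subseteq> {1..m}" and cardR: "card R = h" using assms(5) by (auto simp: Gamma_net_def)
  have finR: "finite R" using Rsub finite_subset by blast
  have Rne: "R \<noteq> {}" using cardR assms(3) by auto
  have fac: "\<And>A. (\<forall>k\<in>R. A k \<in> M k) \<Longrightarrow> tau (prod_ops A R) = (\<Prod>k\<in>R. tau (A k))"
    using ns assms(3,4,5) unfolding network_state_def by blast
  have UBH: "U \<subseteq> BH" unfolding U_def using MBH by blast
  have N_eq: "N = commutant (commutant U)" by (simp add: N_def U_def joint_vN_def)
  have cUBH: "commutant U \<subseteq> BH" by (rule commutant_BH)
  have NBH: "N \<subseteq> BH" unfolding N_eq by (rule commutant_BH)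
  have N_plus: "\<And>A B. A \<in> N \<Longrightarrow> B \<in> N \<Longrightarrow> op_plus A B \<in> N" unfolding N_eq using commutant_plus[OF cUBH] by blast
  have N_minus: "\<And>A B. A \<in> N \<Longrightarrow> B \<in> N \<Longrightarrow> op_minus A B \<in> N" unfolding N_eq using commutant_minus[OF cUBH] by blast
  have N_scale: "\<And>A t. A \<in> N \<Longrightarrow> op_scale (complex_of_real t) A \<in> N" unfolding N_eq using commutant_scale[OF cUBH] by blast
  have N_comp: "\<And>A B. A \<in> N \<Longrightarrow> B \<in> N \<Longrightarrow> A \<circ> B \<in> N" unfolding N_eq using commutant_comp by blast
  have N_id: "id \<in> N" unfolding N_eq by (rule commutant_id)
  have MN: "\<And>i. i \<in> {1..m} \<Longrightarrow> M i \<subseteq> N"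
  proof -
    fix i assume i: "i \<in> {1..m}"
    have "M i \<subseteq> U" using i by (auto simp: U_def)
    then show "M i \<subseteq> N" unfolding N_eq using UBH commutant_sub[of U] by blast
  qed
  have M_plus: "\<And>i A B. i \<in> {1..m} \<Longrightarrow> A \<in> M i \<Longrightarrow> B \<in> M i \<Longrightarrow> op_plus A B \<in> M i"
    by (metis Mcc commutant_BH commutant_plus)
  have M_minus: "\<And>i A B. i \<in> {1..m} \<Longrightarrow> A \<in> M i \<Longrightarrow> B \<in> M i \<Longrightarrow> op_minus A B \<in> M i"
    by (metis Mcc commutant_BH commutant_minus)
  have M_comp: "\<And>i A B. i \<in> {1..m} \<Longrightarrow> A \<in> M i \<Longrightarrow> B \<in> M i \<Longrightarrow> A \<circ> B \<in> M i"
    by (metis Mcc commutant_comp)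
  have pc: "\<And>f S. S \<subseteq> {1..m} \<Longrightarrow> (\<forall>i\<in>S. f i \<in> M i) \<Longrightarrow> pcomm f S"
    unfolding pcomm_def
  proof (intro ballI impI)
    fix f S i j assume S: "S \<subseteq> {1..m}" and f: "\<forall>i\<in>S. f i \<in> M i" and ij: "i \<in> S" "j \<in> S" "i \<noteq> j"
    have i1: "i \<in> {1..m}" and j1: "j \<in> {1..m}" using S ij by auto
    have "f i \<in> M i" using f ij by blast
    then have "f i \<in> commutant (M j)" using comm[OF i1 j1 ij(3)] by blast
    then show "f i \<circ> f j = f j \<circ> f i" using commutant_comm f ij by blast
  qed
  have obs: "\<And>i. i \<in> {1..m} \<Longrightarrow> A0 i \<in> M i \<and> lin (A0 i) \<and> symm (A0 i) \<and> contr (A0 i)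
                                 \<and> A1 i \<in> M i \<and> lin (A1 i) \<and> symm (A1 i) \<and> contr (A1 i)"
    using assms(6) MBH observable_props by (metis observable_in_def)
  have sqle1: "\<And>T. T \<in> N \<Longrightarrow> symm T \<Longrightarrow> contr T \<Longrightarrow> Re (tau (T \<circ> T)) \<le> 1"
  proof -
    fix T assume T: "T \<in> N" "symm T" "contr T"
    have TT: "T \<circ> T \<in> N" using T N_comp by blast
    have mN: "op_minus id (T \<circ> T) \<in> N" using N_minus[OF N_id TT] .
    have "0 \<le> Re (tau (op_minus id (T \<circ> T)))"
      using state_pos[OF st mN pos_id_minus_sq[OF T(2,3)]] by simp
    then show "Re (tau (T \<circ> T)) \<le> 1" using state_minus[OF st N_id TT mN] state_id[OF st] by simp
  qed
  have bound: "(cmod (tau (prod_ops (\<lambda>i. if i \<in> R then g i else e i) {1..m})))^2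
                 \<le> (\<Prod>k\<in>R. Re (tau (g k \<circ> g k)))
             \<and> (\<forall>k\<in>R. Im (tau (g k \<circ> g k)) = 0 \<and> 0 \<le> Re (tau (g k \<circ> g k)))"
    if e: "\<forall>i\<in>{1..m}. e i \<in> M i \<and> lin (e i) \<and> symm (e i) \<and> contr (e i)"
    and g: "\<forall>i\<in>R. g i \<in> M i \<and> lin (g i) \<and> symm (g i)" for g e
  proof -
    define f where "f = (\<lambda>i. if i \<in> R then g i else e i)"
    define Rc where "Rc = {1..m} - R"
    have finRc: "finite Rc" by (simp add: Rc_def)
    have fM: "\<forall>i\<in>{1..m}. f i \<in> M i" using e g Rsub by (auto simp: f_def)
    have pf: "pcomm f {1..m}" using pc fM by blast
    have un: "{1..m} = R \<union> Rc" using Rsub by (auto simp: Rc_def)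
    have split: "prod_ops f {1..m} = prod_ops f R \<circ> prod_ops f Rc"
      using prod_ops_split[OF finR finRc _ ] pf un by (simp add: Rc_def)
    have PR: "prod_ops f R = prod_ops g R" by (rule prod_ops_cong) (simp add: f_def)
    have XR: "prod_ops f Rc = prod_ops e Rc" by (rule prod_ops_cong) (simp add: f_def Rc_def)
    define P where "P = prod_ops g R"
    define X where "X = prod_ops e Rc"
    have gN: "\<forall>i\<in>R. g i \<in> N" using g MN Rsub by blast
    have Rc1: "\<And>i. i \<in> Rc \<Longrightarrow> i \<in> {1..m}" by (simp add: Rc_def)
    have eN: "\<forall>i\<in>Rc. e i \<in> N" using e MN Rc1 by blast
    have PN: "P \<in> N" unfolding P_def using prod_ops_closed[OF finR gN N_id] N_comp by blast
    have XN: "X \<in> N" unfolding X_def using prod_ops_closed[OF finRc eN N_id] N_comp by blast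
    have Plin: "lin P" using PN NBH BH_lin by blast
    have Xlin: "lin X" using XN NBH BH_lin by blast
    have pg: "pcomm g R" using pc[of R g] g Rsub by auto
    have pe: "pcomm e Rc" using pc[of Rc e] e by (auto simp: Rc_def)
    have Psym: "symm P" unfolding P_def using prod_ops_symm[OF finR pg] g by auto
    have Xsym: "symm X" unfolding X_def using prod_ops_symm[OF finRc pe] e by (auto simp: Rc_def)
    have Xcontr: "contr X" unfolding X_def
      using prod_ops_closed[OF finRc, of e "{T. contr T}"] e contr_id contr_comp by (auto simp: Rc_def)
    have gX: "\<forall>j\<in>R. g j \<circ> X = X \<circ> g j"
    proof
      fix j assume j: "j \<in> R"
      have "\<forall>k\<in>Rc. g j \<circ> e k = e k \<circ> g j"
      proof
        fix k assume k: "k \<in> Rc"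
        have j1: "j \<in> {1..m}" using j Rsub by blast
        have k1: "k \<in> {1..m}" and jk: "j \<noteq> k" using k j by (auto simp: Rc_def)
        have "g j \<in> M j" using g j by blast
        then have "g j \<in> commutant (M k)" using comm[OF j1 k1 jk] by blast
        moreover have "e k \<in> M k" using e k1 by blast
        ultimately show "g j \<circ> e k = e k \<circ> g j" by (rule commutant_comm)
      qed
      then show "g j \<circ> X = X \<circ> g j" unfolding X_def by (rule prod_ops_comm[OF finRc])
    qed
    have cPX: "P \<circ> X = X \<circ> P"
      using prod_ops_comm[OF finR, of X g] gX unfolding P_def by simp
    have cs: "(cmod (tau (P \<circ> X)))^2 \<le> Re (tau (P \<circ> P)) * Re (tau (X \<circ> X))"
      by (rule cauchy_schwarz[OF st N_plus N_scale N_comp PN Plin Psym XN Xlin Xsym cPX])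
    have XX1: "Re (tau (X \<circ> X)) \<le> 1" by (rule sqle1[OF XN Xsym Xcontr])
    have XX0: "0 \<le> Re (tau (X \<circ> X))"
      using state_pos[OF st N_comp[OF XN XN] pos_sq[OF Xsym]] by simp
    have gg: "\<forall>k\<in>R. Im (tau (g k \<circ> g k)) = 0 \<and> 0 \<le> Re (tau (g k \<circ> g k))"
    proof
      fix k assume k: "k \<in> R"
      have "g k \<circ> g k \<in> N" using gN k N_comp by blast
      then show "Im (tau (g k \<circ> g k)) = 0 \<and> 0 \<le> Re (tau (g k \<circ> g k))"
        using state_pos[OF st _ pos_sq] g k by blast
    qed
    have "tau (P \<circ> P) = tau (prod_ops (\<lambda>i. g i \<circ> g i) R)"
      unfolding P_def using prod_ops_square[OF finR pg] by simp
    also have "\<dots> = (\<Prod>k\<in>R. tau (g k \<circ> g k))"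
      by (rule fac) (use g Rsub M_comp in blast)
    also have "\<dots> = complex_of_real (\<Prod>k\<in>R. Re (tau (g k \<circ> g k)))"
      by (rule prod_of_real_parts[OF finR]) (use gg in blast)
    finally have PP: "Re (tau (P \<circ> P)) = (\<Prod>k\<in>R. Re (tau (g k \<circ> g k)))" by (simp only: Re_complex_of_real)
    have prod0: "0 \<le> (\<Prod>k\<in>R. Re (tau (g k \<circ> g k)))" using gg by (simp add: prod_nonneg)
    have "Re (tau (P \<circ> P)) * Re (tau (X \<circ> X)) \<le> (\<Prod>k\<in>R. Re (tau (g k \<circ> g k)))"
      unfolding PP using XX1 prod0 by (simp add: mult_left_le)
    moreover have "prod_ops f {1..m} = P \<circ> X" using split PR XR by (simp add: P_def X_def)
    ultimately show ?thesis using cs gg by (simp add: f_def)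
  qed
  define a where "a = (\<lambda>k. Re (tau (op_plus (A0 k) (A1 k) \<circ> op_plus (A0 k) (A1 k))))"
  define b where "b = (\<lambda>k. Re (tau (op_minus (A0 k) (A1 k) \<circ> op_minus (A0 k) (A1 k))))"
  have bI: "(cmod (I_tau m R A0 A1 tau))^2 \<le> (\<Prod>k\<in>R. a k) \<and> (\<forall>k\<in>R. 0 \<le> a k)"
  proof -
    have "(cmod (tau (prod_ops (\<lambda>i. if i \<in> R then op_plus (A0 i) (A1 i) else A0 i) {1..m})))^2
                 \<le> (\<Prod>k\<in>R. Re (tau (op_plus (A0 k) (A1 k) \<circ> op_plus (A0 k) (A1 k))))
             \<and> (\<forall>k\<in>R. Im (tau (op_plus (A0 k) (A1 k) \<circ> op_plus (A0 k) (A1 k))) = 0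
                 \<and> 0 \<le> Re (tau (op_plus (A0 k) (A1 k) \<circ> op_plus (A0 k) (A1 k))))"
    proof (rule bound)
      show "\<forall>i\<in>{1..m}. A0 i \<in> M i \<and> lin (A0 i) \<and> symm (A0 i) \<and> contr (A0 i)" using obs by blast
      show "\<forall>i\<in>R. op_plus (A0 i) (A1 i) \<in> M i \<and> lin (op_plus (A0 i) (A1 i)) \<and> symm (op_plus (A0 i) (A1 i))"
        using obs Rsub M_plus MBH BH_lin symm_plus by (meson subsetD)
    qed
    then show ?thesis by (simp add: I_tau_def a_def)
  qed
  have bJ: "(cmod (J_tau m R A0 A1 tau))^2 \<le> (\<Prod>k\<in>R. b k) \<and> (\<forall>k\<in>R. 0 \<le> b k)"
  proof -
    have "(cmod (tau (prod_ops (\<lambda>i. if i \<in> R then op_minus (A0 i) (A1 i) else A1 i) {1..m})))^2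
                 \<le> (\<Prod>k\<in>R. Re (tau (op_minus (A0 k) (A1 k) \<circ> op_minus (A0 k) (A1 k))))
             \<and> (\<forall>k\<in>R. Im (tau (op_minus (A0 k) (A1 k) \<circ> op_minus (A0 k) (A1 k))) = 0
                 \<and> 0 \<le> Re (tau (op_minus (A0 k) (A1 k) \<circ> op_minus (A0 k) (A1 k))))"
    proof (rule bound)
      show "\<forall>i\<in>{1..m}. A1 i \<in> M i \<and> lin (A1 i) \<and> symm (A1 i) \<and> contr (A1 i)" using obs by blast
      show "\<forall>i\<in>R. op_minus (A0 i) (A1 i) \<in> M i \<and> lin (op_minus (A0 i) (A1 i)) \<and> symm (op_minus (A0 i) (A1 i))"
        using obs Rsub M_minus MBH BH_lin symm_minus by (meson subsetD)
    qed
    then show ?thesis by (simp add: J_tau_def b_def)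
  qed
  have ab: "\<forall>k\<in>R. a k + b k \<le> 4"
  proof
    fix k assume kR: "k \<in> R"
    then have k: "k \<in> {1..m}" using Rsub by blast
    define x where "x = A0 k"
    define y where "y = A1 k"
    have xM: "x \<in> M k" and yM: "y \<in> M k" and xl: "lin x" and yl: "lin y" and xs: "symm x" and ys: "symm y"
      and xc: "contr x" and yc: "contr y" using obs[OF k] by (simp_all add: x_def y_def)
    have xN: "x \<in> N" and yN: "y \<in> N" using xM yM MN k by auto
    have xx: "x \<circ> x \<in> N" and yy: "y \<circ> y \<in> N" using xN yN N_comp by auto
    have pN: "op_plus x y \<circ> op_plus x y \<in> N" using xN yN N_plus N_comp by blast
    have mN: "op_minus x y \<circ> op_minus x y \<in> N" using xN yN N_minus N_comp by blast
    have eq: "op_plus (op_plus x y \<circ> op_plus x y) (op_minus x y \<circ> op_minus x y)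
              = op_plus (op_plus (x \<circ> x) (x \<circ> x)) (op_plus (y \<circ> y) (y \<circ> y))"
      using xl yl by (auto simp: fun_eq_iff op_plus_def op_minus_def lin_add lin_diff algebra_simps)
    have "tau (op_plus x y \<circ> op_plus x y) + tau (op_minus x y \<circ> op_minus x y)
          = tau (x \<circ> x) + tau (x \<circ> x) + (tau (y \<circ> y) + tau (y \<circ> y))"
      using arg_cong[OF eq, of tau] state_plus[OF st pN mN] state_plus[OF st xx xx] state_plus[OF st yy yy]
        state_plus[OF st N_plus[OF xx xx] N_plus[OF yy yy]] by simp
    then have "a k + b k = 2 * Re (tau (x \<circ> x)) + 2 * Re (tau (y \<circ> y))"
      unfolding a_def b_def x_def y_def using arg_cong[of _ _ Re] by (metis plus_complex.sel(1) mult_2)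
    moreover have "Re (tau (x \<circ> x)) \<le> 1" by (rule sqle1[OF xN xs xc])
    moreover have "Re (tau (y \<circ> y)) \<le> 1" by (rule sqle1[OF yN ys yc])
    ultimately show "a k + b k \<le> 4" by simp
  qed
  show ?thesis unfolding S_tau_def
    by (rule final_real[OF finR Rne cardR, where a=a and b=b]) (use bI bJ ab in auto)
qed


end
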